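(* Let $X$ be a countable Markov shift over the alphabet $\mathbb N$, let $\phi\colon X\to\mathbb R$ be a measurable function, and assume there exists a Gibbs state for the potential $\phi$. Then $\sup\phi<\infty$, $\inf\phi=-\infty$, and $\sup_{n\ge1}D_n(\phi)<\infty$.
   Context: $\mathbb N=\{0,1,2,\dots\}$ with discrete topology; $A$ is a 0-1 matrix indexed by $\mathbb N$ with no zero row or column; $X=\{x\in\mathbb N^{\mathbb N}:A_{x_ix_{i+1}}=1\ \forall i\}$ with product topology and left shift $\sigma$. $E^n$ is the set of admissible strings $w_0\cdots w_{n-1}$ ($A_{w_iw_{i+1}}=1$ for consecutive letters), $[w]=\{x\in X:x_i=w_i,\ i<n\}$. $S_n\varphi=\sum_{i=0}^{n-1}\varphi\circ\sigma^i$. $D_n(\varphi)=\sup_{w\in E^n}\sup_{x,y\in[w]}(S_n\varphi(x)-S_n\varphi(y))$. A Borel probability measure $\mu_\phi$ on $X$ is a Gibbs state for $\phi$ if there are constants $c_0\ge1$, $P\in\mathbb R$ with $c_0^{-1}\le\mu_\phi[x_0,\dots,x_{n-1}]/\exp(-Pn+S_n\phi(x))\le c_0$ for all $n\ge1$, $x\in X$. *)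

theory Defs
  imports "HOL-Probability.Probability"
begin

text \<open>Countable Markov shift over the alphabet nat, transition matrix A (0-1 matrix
  represented as a boolean relation: A i j = True iff A_{ij} = 1).
  nat carries its (discrete) order topology, nat => nat the product topology.\<close>

definition shift_space :: "(nat \<Rightarrow> nat \<Rightarrow> bool) \<Rightarrow> (nat \<Rightarrow> nat) set" where
  "shift_space A = {x. \<forall>i. A (x i) (x (Suc i))}"

definition shift :: "(nat \<Rightarrow> nat) \<Rightarrow> (nat \<Rightarrow> nat)" where
  "shift x = (\<lambda>k. x (Suc k))"

definition birkhoff_sum :: "((nat \<Rightarrow> nat) \<Rightarrow> real) \<Rightarrow> nat \<Rightarrow> (nat \<Rightarrow> nat) \<Rightarrow> real" where
  "birkhoff_sum \<phi> n x = (\<Sum>i<n. \<phi> ((shift ^^ i) x))"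

definition admissible_words :: "(nat \<Rightarrow> nat \<Rightarrow> bool) \<Rightarrow> nat \<Rightarrow> nat list set" where
  "admissible_words A n = {w. length w = n \<and> (\<forall>i. Suc i < n \<longrightarrow> A (w ! i) (w ! Suc i))}"

definition cylinder :: "(nat \<Rightarrow> nat \<Rightarrow> bool) \<Rightarrow> nat list \<Rightarrow> (nat \<Rightarrow> nat) set" where
  "cylinder A w = {x \<in> shift_space A. \<forall>i<length w. x i = w ! i}"

definition variation :: "(nat \<Rightarrow> nat \<Rightarrow> bool) \<Rightarrow> ((nat \<Rightarrow> nat) \<Rightarrow> real) \<Rightarrow> nat \<Rightarrow> ereal" where
  "variation A \<phi> n = (SUP w \<in> admissible_words A n. SUP p \<in> cylinder A w \<times> cylinder A w.
       ereal (birkhoff_sum \<phi> n (fst p) - birkhoff_sum \<phi> n (snd p)))"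

definition gibbs_state :: "(nat \<Rightarrow> nat \<Rightarrow> bool) \<Rightarrow> ((nat \<Rightarrow> nat) \<Rightarrow> real) \<Rightarrow> (nat \<Rightarrow> nat) measure \<Rightarrow> bool" where
  "gibbs_state A \<phi> \<mu> \<longleftrightarrow>
     sets \<mu> = sets (restrict_space borel (shift_space A)) \<and> prob_space \<mu> \<and>
     (\<exists>c0::real. \<exists>P::real. c0 \<ge> 1 \<and>
        (\<forall>n\<ge>1. \<forall>x \<in> shift_space A.
           inverse c0 \<le> measure \<mu> (cylinder A (map x [0..<n])) / exp (- P * real n + birkhoff_sum \<phi> n x)
         \<and> measure \<mu> (cylinder A (map x [0..<n])) / exp (- P * real n + birkhoff_sum \<phi> n x) \<le> c0))"

end

theory Submission
  imports Defs
begin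

lemma gibbs_bounds:
  fixes c0 m e :: real
  assumes "inverse c0 \<le> m / e" "m / e \<le> c0" "c0 \<ge> 1" "e > 0"
  shows "e \<le> c0 * m" "m \<le> c0 * e" "m > 0"
proof -
  have "inverse c0 * e \<le> (m / e) * e" by (rule mult_right_mono) (use assms in auto)
  then have "inverse c0 * e \<le> m" using assms by simp
  then show "e \<le> c0 * m" using assms by (simp add: field_simps)
  show "m \<le> c0 * e" using assms by (simp add: field_simps)
  have "inverse c0 > 0" using assms by simp
  then have "m / e > 0" using assms(1) by linarith
  then show "m > 0" using assms(4) by (simp add: zero_less_divide_iff)
qed

theorem lemma2p2:
  fixes A :: "nat \<Rightarrow> nat \<Rightarrow> bool" and \<phi> :: "(nat \<Rightarrow> nat) \<Rightarrow> real"
  assumes no_zero_row: "\<forall>i. \<exists>j. A i j"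
    and no_zero_col: "\<forall>j. \<exists>i. A i j"
    and meas: "\<phi> \<in> borel_measurable (restrict_space borel (shift_space A))"
    and gibbs: "\<exists>\<mu>. gibbs_state A \<phi> \<mu>"
  shows "(SUP x \<in> shift_space A. ereal (\<phi> x)) < \<infinity> \<and>
         (INF x \<in> shift_space A. ereal (\<phi> x)) = - \<infinity> \<and>
         (SUP n \<in> {1..}. variation A \<phi> n) < \<infinity>"
proof -
  obtain \<mu> c0 P where ps: "prob_space \<mu>" and c0: "c0 \<ge> 1" and
    G: "\<And>n x. n \<ge> 1 \<Longrightarrow> x \<in> shift_space A \<Longrightarrow>
       inverse c0 \<le> measure \<mu> (cylinder A (map x [0..<n])) / exp (- P * real n + birkhoff_sum \<phi> n x)
         \<and> measure \<mu> (cylinder A (map x [0..<n])) / exp (- P * real n + birkhoff_sum \<phi> n x) \<le> c0"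
    using gibbs unfolding gibbs_state_def by blast
  have fm: "finite_measure \<mu>" using ps by (simp add: prob_space_def)
  have le1: "measure \<mu> S \<le> 1" for S using prob_space.prob_le_1[OF ps] by simp
  note B = gibbs_bounds[OF conjunct1[OF G] conjunct2[OF G] c0 exp_gt_zero]
  have b1: "birkhoff_sum \<phi> (Suc 0) x = \<phi> x" for x by (simp add: birkhoff_sum_def)
  have cyl1: "map x [0..<1] = [x 0]" for x :: "nat \<Rightarrow> nat" by simp
  have phi_up: "exp (\<phi> x) \<le> c0 * exp P * measure \<mu> (cylinder A [x 0])" if "x \<in> shift_space A" for x
  proof -
    have "exp (- P * real 1 + birkhoff_sum \<phi> 1 x) \<le> c0 * measure \<mu> (cylinder A (map x [0..<1]))"
      using B(1)[of 1 x] that by simp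
    then have "exp (- P + \<phi> x) \<le> c0 * measure \<mu> (cylinder A [x 0])" by (simp add: b1)
    then have "exp P * exp (- P + \<phi> x) \<le> exp P * (c0 * measure \<mu> (cylinder A [x 0]))"
      by simp
    also have "exp P * exp (- P + \<phi> x) = exp (\<phi> x)" by (simp add: exp_add[symmetric])
    finally show ?thesis by (simp add: ac_simps)
  qed
  have part1: "(SUP x \<in> shift_space A. ereal (\<phi> x)) < \<infinity>"
  proof -
    have "ereal (\<phi> x) \<le> ereal (ln (c0 * exp P))" if "x \<in> shift_space A" for x
    proof -
      have "c0 * exp P * measure \<mu> (cylinder A [x 0]) \<le> c0 * exp P * 1"
        by (rule mult_left_mono) (use le1 c0 in auto)
      then have "exp (\<phi> x) \<le> c0 * exp P" using phi_up[OF that] by simp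
      then have "\<phi> x \<le> ln (c0 * exp P)" using c0 by (simp add: exp_le ln_ge_iff)
      then show ?thesis by simp
    qed
    then have "(SUP x \<in> shift_space A. ereal (\<phi> x)) \<le> ereal (ln (c0 * exp P))"
      by (rule SUP_least)
    then show ?thesis by (rule order.strict_trans1) simp
  qed
  define nxt where "nxt = (\<lambda>i. SOME j. A i j)"
  have nxt: "A i (nxt i)" for i using no_zero_row unfolding nxt_def by (metis someI_ex)
  define pt where "pt = (\<lambda>a k. (nxt ^^ k) a)"
  have pt_in: "pt a \<in> shift_space A" for a
    unfolding shift_space_def pt_def using nxt by simp
  have pt0: "pt a 0 = a" for a by (simp add: pt_def)
  have cyl_meas: "cylinder A [a] \<in> sets \<mu>" for a
  proof (rule ccontr)
    assume "cylinder A [a] \<notin> sets \<mu>"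
    then have "measure \<mu> (cylinder A [a]) = 0" by (simp add: measure_notin_sets)
    moreover have "measure \<mu> (cylinder A (map (pt a) [0..<1])) > 0" using B(3)[of 1 "pt a"] pt_in by simp
    ultimately show False using pt0 by simp
  qed
  have part2: "(INF x \<in> shift_space A. ereal (\<phi> x)) = - \<infinity>"
  proof (rule ereal_bot)
    fix Bd :: real
    obtain N0 :: nat where N0: "real N0 > c0 * exp P / exp Bd"
      using reals_Archimedean2 by blast
    define N where "N = Suc N0"
    have N: "real N > c0 * exp P / exp Bd" "N \<ge> 1" using N0 by (auto simp: N_def)
    have disj: "disjoint_family_on (\<lambda>a. cylinder A [a]) {..<N}"
      unfolding disjoint_family_on_def cylinder_def by auto
    have "(\<Sum>a<N. measure \<mu> (cylinder A [a])) = measure \<mu> (\<Union>a<N. cylinder A [a])"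
      by (rule measure_finite_Union[symmetric]) (use disj cyl_meas finite_measure.emeasure_finite[OF fm] in auto)
    also have "\<dots> \<le> 1" by (rule le1)
    finally have sumle: "(\<Sum>a<N. measure \<mu> (cylinder A [a])) \<le> 1" .
    have "\<exists>a<N. measure \<mu> (cylinder A [a]) \<le> 1 / real N"
    proof (rule ccontr)
      assume "\<not> ?thesis"
      then have "\<And>a. a \<in> {..<N} \<Longrightarrow> 1 / real N < measure \<mu> (cylinder A [a])" by auto
      then have "(\<Sum>a<N. 1 / real N) < (\<Sum>a<N. measure \<mu> (cylinder A [a]))"
        using N(2) sum_strict_mono[of "{..<N}" "\<lambda>_. 1 / real N" "\<lambda>a. measure \<mu> (cylinder A [a])"]
        by (auto simp: lessThan_empty_iff)
      then show False using sumle N(2) by simp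
    qed
    then obtain a where a: "measure \<mu> (cylinder A [a]) \<le> 1 / real N" by blast
    have "c0 * exp P * measure \<mu> (cylinder A [a]) \<le> c0 * exp P * (1 / real N)"
      by (rule mult_left_mono) (use a c0 in auto)
    then have "exp (\<phi> (pt a)) \<le> c0 * exp P * (1 / real N)"
      using phi_up[OF pt_in[of a]] pt0[of a] by simp
    also have "\<dots> < exp Bd"
      using N by (simp add: field_simps)
    finally have "\<phi> (pt a) < Bd" by simp
    then have "(INF x \<in> shift_space A. ereal (\<phi> x)) \<le> ereal (\<phi> (pt a))"
      using pt_in by (intro INF_lower) auto
    then show "(INF x \<in> shift_space A. ereal (\<phi> x)) \<le> ereal Bd"
      using \<open>\<phi> (pt a) < Bd\<close> by (meson ereal_less_eq(3) less_imp_le order_trans)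
  qed
  have var: "variation A \<phi> n \<le> ereal (2 * ln c0)" if "n \<ge> 1" for n
    unfolding variation_def
  proof (intro SUP_least, clarify)
    fix w x y assume w: "w \<in> admissible_words A n" and x: "x \<in> cylinder A w" and y: "y \<in> cylinder A w"
    have lw: "length w = n" using w by (simp add: admissible_words_def)
    have wx: "map x [0..<n] = w" using x lw by (intro nth_equalityI) (auto simp: cylinder_def)
    have wy: "map y [0..<n] = w" using y lw by (intro nth_equalityI) (auto simp: cylinder_def)
    have xs: "x \<in> shift_space A" and ys: "y \<in> shift_space A" using x y by (auto simp: cylinder_def)
    define m where "m = measure \<mu> (cylinder A w)"
    have h1: "exp (- P * real n + birkhoff_sum \<phi> n x) \<le> c0 * m"
      using B(1)[of n x] that xs wx by (auto simp add: m_def)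
    have h2: "m \<le> c0 * exp (- P * real n + birkhoff_sum \<phi> n y)"
      using B(2)[of n y] that ys wy by (auto simp add: m_def)
    have "exp (- P * real n + birkhoff_sum \<phi> n x) \<le> c0 * (c0 * exp (- P * real n + birkhoff_sum \<phi> n y))"
    proof -
      have "c0 * m \<le> c0 * (c0 * exp (- P * real n + birkhoff_sum \<phi> n y))"
        by (rule mult_left_mono) (use h2 c0 in auto)
      then show ?thesis using h1 by linarith
    qed
    then have "exp (birkhoff_sum \<phi> n x - birkhoff_sum \<phi> n y)
        \<le> exp (2 * ln c0)"
    proof -
      define u where "u = - P * real n + birkhoff_sum \<phi> n x"
      define v where "v = - P * real n + birkhoff_sum \<phi> n y"
      assume h: "exp (- P * real n + birkhoff_sum \<phi> n x) \<le> c0 * (c0 * exp (- P * real n + birkhoff_sum \<phi> n y))"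
      then have h': "exp u \<le> (c0 * c0) * exp v" unfolding u_def v_def by (simp only: mult.assoc)
      have e2: "exp (2 * ln c0) = c0 * c0" 
      proof -
        have "exp (2 * ln c0) = exp (ln c0 + ln c0)" by (simp only: mult_2)
        also have "\<dots> = exp (ln c0) * exp (ln c0)" by (rule exp_add)
        also have "\<dots> = c0 * c0" using c0 by simp
        finally show ?thesis .
      qed
      have d: "birkhoff_sum \<phi> n x - birkhoff_sum \<phi> n y = u - v" unfolding u_def v_def by simp
      have "exp (u - v) = exp u / exp v" by (rule exp_diff)
      also have "\<dots> \<le> c0 * c0" using h' by (simp add: divide_le_eq)
      finally show ?thesis using d e2 by simp
    qed
    then show "ereal (birkhoff_sum \<phi> n (fst (x, y)) - birkhoff_sum \<phi> n (snd (x, y))) \<le> ereal (2 * ln c0)"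
      by simp
  qed
  have part3: "(SUP n \<in> {1..}. variation A \<phi> n) < \<infinity>"
  proof -
    have "(SUP n \<in> {1..}. variation A \<phi> n) \<le> ereal (2 * ln c0)" using var by (intro SUP_least) auto
    then show ?thesis by (rule order.strict_trans1) simp
  qed
  show ?thesis using part1 part2 part3 by blast
qed

end
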